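(* Let $n=\prod_{i=1}^{k}p_i^{t_i}$, where $p_1,\dots,p_k$ are distinct odd primes and $t_1,\dots,t_k\ge 0$ are integers. Then the lattice $\widetilde\Pi(D_n)$ is isomorphic to the direct product lattice $T(n)\times C_2$.
   Context: For a positive integer $n$, $D_n=\langle r,s\mid r^n=e,\ s^2=e,\ srs^{-1}=r^{-1}\rangle$ is the dihedral group of order $2n$. For a finite group $G$ and a subgroup $H\le G$, let $\pi_e(H)=\{o(x)\mid x\in H\}$. Let $\mathcal{L}(G)$ be the set of subgroups of $G$; define $H_1\equiv H_2$ iff $\pi_e(H_1)=\pi_e(H_2)$, with class $[H]$. The poset $\widetilde\Pi(G)$ is $\mathcal{L}(G)/\!\equiv$ ordered by $[H_1]\lesssim[H_2]$ iff $\pi_e(H_1)\subseteq\pi_e(H_2)$ (for $G=D_n$ this poset is a lattice). $T(n)$ denotes the lattice of positive divisors of $n$ ordered by divisibility, $C_2$ the two-element chain, and $T(n)\times C_2$ carries the componentwise order. *)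

theory Defs
  imports "HOL-Algebra.Multiplicative_Group"
begin

text \<open>Concrete model of the dihedral group D_n of order 2n: the pair (k, b) stands for
  r^k s^(if b then 1 else 0), with 0 <= k < n.  The multiplication follows from
  r^n = e, s^2 = e, s r s^-1 = r^-1:  r^a s^b r^c s^d = r^(a +/- c) s^(b+d).\<close>
definition dihedral :: "nat \<Rightarrow> (nat \<times> bool) monoid" where
  "dihedral n = \<lparr> carrier = {(k, b). k < n},
     mult = (\<lambda>(a, b) (c, d). ((a + (if b then n - c else c)) mod n, b \<noteq> d)),
     one = (0, False) \<rparr>"

definition pi_e :: "('a, 'b) monoid_scheme \<Rightarrow> 'a set \<Rightarrow> nat set" where
  "pi_e G H = group.ord G ` H"

definition pe_class :: "('a, 'b) monoid_scheme \<Rightarrow> 'a set \<Rightarrow> 'a set set" where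
  "pe_class G H = {K. subgroup K G \<and> pi_e G K = pi_e G H}"

definition pe_classes :: "('a, 'b) monoid_scheme \<Rightarrow> 'a set set set" where
  "pe_classes G = {pe_class G H | H. subgroup H G}"

definition pe_le :: "('a, 'b) monoid_scheme \<Rightarrow> 'a set set \<Rightarrow> 'a set set \<Rightarrow> bool" where
  "pe_le G X Y = (\<exists>H1 H2. subgroup H1 G \<and> subgroup H2 G \<and> X = pe_class G H1 \<and> Y = pe_class G H2
                       \<and> pi_e G H1 \<subseteq> pi_e G H2)"

definition TC2 :: "nat \<Rightarrow> (nat \<times> bool) set" where
  "TC2 n = {d. d dvd n} \<times> UNIV"

definition TC2_le :: "nat \<times> bool \<Rightarrow> nat \<times> bool \<Rightarrow> bool" where
  "TC2_le x y = (fst x dvd fst y \<and> (snd x \<longrightarrow> snd y))"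

end

theory Submission
  imports Defs
begin


definition phi :: "bool \<Rightarrow> int \<Rightarrow> int" where "phi b c = (if b then - c else c)"

lemma dmult: "(a, b) \<otimes>\<^bsub>dihedral n\<^esub> (c, d) = ((a + (if b then n - c else c)) mod n, b \<noteq> d)"
  by (simp add: dihedral_def)

lemma dcarrier: "carrier (dihedral n) = {(k, b). k < n}"
  by (simp add: dihedral_def)

lemma d_one: "\<one>\<^bsub>dihedral n\<^esub> = (0, False)"
  by (simp add: dihedral_def)

lemma int_first: "c \<le> n \<Longrightarrow> int ((a + (if b then n - c else c)) mod n) = (int a + phi b (int c)) mod int n"
proof (cases b)
  case True
  assume "c \<le> n"
  then have e: "int (a + (n - c)) = (int a - int c) + int n" by simp
  have "int ((a + (n - c)) mod n) = int (a + (n - c)) mod int n" by (simp only: zmod_int)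
  also have "\<dots> = (int a - int c) mod int n" unfolding e by simp
  finally show ?thesis using True by (simp add: phi_def)
qed (simp add: phi_def zmod_int)


lemma dihedral_group: assumes "n > 0" shows "group (dihedral n)"
proof (rule groupI)
  fix x y assume "x \<in> carrier (dihedral n)" "y \<in> carrier (dihedral n)"
  then show "x \<otimes>\<^bsub>dihedral n\<^esub> y \<in> carrier (dihedral n)"
    using assms by (cases x, cases y) (simp add: dmult dcarrier)
next
  show "\<one>\<^bsub>dihedral n\<^esub> \<in> carrier (dihedral n)" using assms by (simp add: d_one dcarrier)
next
  fix x y z assume "x \<in> carrier (dihedral n)" "y \<in> carrier (dihedral n)" "z \<in> carrier (dihedral n)"
  then obtain a b c d e f where xyz: "x = (a,b)" "y = (c,d)" "z = (e,f)" "a < n" "c < n" "e < n"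
    by (cases x, cases y, cases z) (auto simp: dcarrier)
  have m1: "(a + (if b then n - c else c)) mod n < n" using assms by simp
  have m2: "(c + (if d then n - e else e)) mod n < n" using assms by simp
  have "int ((((a + (if b then n - c else c)) mod n) + (if b \<noteq> d then n - e else e)) mod n)
      = int ((a + (if b then n - ((c + (if d then n - e else e)) mod n) else ((c + (if d then n - e else e)) mod n))) mod n)"
  proof -
    have i2: "int ((c + (if d then n - e else e)) mod n) = (int c + phi d (int e)) mod int n"
      using xyz by (simp add: int_first)
    show ?thesis
    apply (subst int_first, use xyz in simp)
    apply (subst int_first, use xyz in simp)
    apply (subst int_first, use m2 in simp)
    apply (simp only: i2)
    apply (cases b; cases d; simp add: phi_def mod_simps algebra_simps)
    done
  qed
  then show "x \<otimes>\<^bsub>dihedral n\<^esub> y \<otimes>\<^bsub>dihedral n\<^esub> z = x \<otimes>\<^bsub>dihedral n\<^esub> (y \<otimes>\<^bsub>dihedral n\<^esub> z)"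
    using xyz by (simp add: dmult) blast
next
  fix x assume "x \<in> carrier (dihedral n)"
  then show "\<one>\<^bsub>dihedral n\<^esub> \<otimes>\<^bsub>dihedral n\<^esub> x = x"
    by (cases x) (simp add: dmult d_one dcarrier)
next
  fix x assume "x \<in> carrier (dihedral n)"
  then obtain a b where x: "x = (a,b)" "a < n" by (cases x) (auto simp: dcarrier)
  show "\<exists>y\<in>carrier (dihedral n). y \<otimes>\<^bsub>dihedral n\<^esub> x = \<one>\<^bsub>dihedral n\<^esub>"
  proof (cases b)
    case True
    then show ?thesis using x by (intro bexI[of _ "(a, True)"]) (auto simp: dmult d_one dcarrier)
  next
    case False
    then show ?thesis using x assms
      by (intro bexI[of _ "((n - a) mod n, False)"]) (auto simp: dmult d_one dcarrier mod_simps)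
  qed
qed

lemma pow_rot: assumes "n > 0" "a < n"
  shows "(a, False) [^]\<^bsub>dihedral n\<^esub> (j::nat) = ((a * j) mod n, False)"
proof (induction j)
  case 0 then show ?case using assms by (simp add: d_one)
next
  case (Suc j)
  then show ?case by (simp add: dmult mod_simps algebra_simps)
qed

lemma pow_refl: assumes "n > 0" "a < n"
  shows "(a, True) [^]\<^bsub>dihedral n\<^esub> (j::nat) = (if even j then (0, False) else (a, True))"
proof (induction j)
  case 0 then show ?case using assms by (simp add: d_one)
next
  case (Suc j)
  then show ?case using assms by (auto simp: dmult)
qed

lemma inv_rot: assumes "n > 0" "a < n"
  shows "inv\<^bsub>dihedral n\<^esub> (a, False) = ((n - a) mod n, False)"
proof -
  interpret G: group "dihedral n" using assms dihedral_group by blast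
  show ?thesis
    by (rule G.inv_equality) (use assms in \<open>auto simp: dmult d_one dcarrier mod_simps\<close>)
qed

lemma inv_refl: assumes "n > 0" "a < n"
  shows "inv\<^bsub>dihedral n\<^esub> (a, True) = (a, True)"
proof -
  interpret G: group "dihedral n" using assms dihedral_group by blast
  show ?thesis
    by (rule G.inv_equality) (use assms in \<open>auto simp: dmult d_one dcarrier\<close>)
qed

lemma ord_rot: assumes "n > 0" "a < n"
  shows "group.ord (dihedral n) (a, False) = n div gcd a n"
proof -
  interpret G: group "dihedral n" using assms dihedral_group by blast
  have key: "n dvd a * j \<longleftrightarrow> n div gcd a n dvd j" for j
  proof -
    define g where "g = gcd a n"
    have g: "g \<noteq> 0" using assms by (simp add: g_def)
    obtain a' n' where an: "a = a' * g" "n = n' * g" "coprime a' n'"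
      using gcd_coprime_exists[of a n, folded g_def] g by blast
    have "n' = n div g" using g by (simp add: an(2))
    moreover have "n dvd a * j \<longleftrightarrow> g * n' dvd g * (a' * j)"
      using an by (simp add: ac_simps)
    then have "n dvd a * j \<longleftrightarrow> n' dvd a' * j"
      using g by (simp add: nat_mult_dvd_cancel_disj)
    moreover have "n' dvd a' * j \<longleftrightarrow> n' dvd j"
      using coprime_dvd_mult_right_iff[of n' a' j] an(3) coprime_commute by blast
    ultimately show ?thesis by (simp add: g_def)
  qed
  have c: "(a, False) \<in> carrier (dihedral n)" using assms by (simp add: dcarrier)
  have "\<forall>j. (a, False) [^]\<^bsub>dihedral n\<^esub> j = \<one>\<^bsub>dihedral n\<^esub> \<longleftrightarrow> n div gcd a n dvd j"
  proof
    fix j :: nat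
    have "(a, False) [^]\<^bsub>dihedral n\<^esub> j = \<one>\<^bsub>dihedral n\<^esub> \<longleftrightarrow> (a * j) mod n = 0"
      using assms by (simp add: pow_rot d_one)
    also have "\<dots> \<longleftrightarrow> n dvd a * j" by (simp add: dvd_eq_mod_eq_0)
    also have "\<dots> \<longleftrightarrow> n div gcd a n dvd j" by (rule key)
    finally show "(a, False) [^]\<^bsub>dihedral n\<^esub> j = \<one>\<^bsub>dihedral n\<^esub> \<longleftrightarrow> n div gcd a n dvd j" .
  qed
  then show ?thesis using G.ord_unique[OF c] by blast
qed

lemma ord_refl: assumes "n > 0" "a < n"
  shows "group.ord (dihedral n) (a, True) = 2"
proof -
  interpret G: group "dihedral n" using assms dihedral_group by blast
  show ?thesis
    using assms by (subst G.ord_unique) (auto simp: dcarrier pow_refl d_one)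
qed



lemma div_dvd_div_aux: fixes g m n :: nat
  assumes "g dvd n" "m dvd g" "g > 0" shows "n div g dvd n div m"
proof -
  obtain k where k: "n = g * k" using assms(1) by blast
  obtain l where l: "g = m * l" using assms(2) by blast
  have m: "m > 0" using assms(3) l by (cases m) auto
  have "n div g = k" using k assms(3) by simp
  moreover have "n div m = l * k" using k l m by simp
  ultimately show ?thesis by simp
qed

lemma nt_orders: fixes m n :: nat
  assumes "m > 0" "m dvd n" "n > 0"
  shows "(\<lambda>a. n div gcd a n) ` {a. a < n \<and> m dvd a} = {e. e dvd n div m}"
proof
  show "(\<lambda>a. n div gcd a n) ` {a. a < n \<and> m dvd a} \<subseteq> {e. e dvd n div m}"
  proof
    fix x assume "x \<in> (\<lambda>a. n div gcd a n) ` {a. a < n \<and> m dvd a}"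
    then obtain a where a: "a < n" "m dvd a" "x = n div gcd a n" by blast
    have "gcd a n > 0" using assms by simp
    then show "x \<in> {e. e dvd n div m}"
      using div_dvd_div_aux[of "gcd a n" n m] a assms by simp
  qed
next
  show "{e. e dvd n div m} \<subseteq> (\<lambda>a. n div gcd a n) ` {a. a < n \<and> m dvd a}"
  proof
    fix e assume "e \<in> {e. e dvd n div m}"
    then obtain t where t: "n div m = e * t" by auto
    have nm: "n = m * (n div m)" using assms by simp
    have d0: "n div m \<noteq> 0" using nm assms(3) by (metis mult_0_right less_irrefl)
    have t0: "t > 0" "e > 0" using d0 t by auto
    have n_eq: "n = (m * t) * e" using nm t by (simp add: ac_simps)
    define a where "a = (m * t) mod n"
    have "m dvd a" unfolding a_def using assms by (simp add: dvd_mod)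
    moreover have "a < n" unfolding a_def using assms by simp
    moreover have "gcd a n = m * t"
    proof -
      have "gcd a n = gcd n ((m * t) mod n)" unfolding a_def by (rule gcd.commute)
      also have "\<dots> = gcd (m * t) n" by (rule gcd_red_nat[symmetric])
      also have "\<dots> = m * t" using n_eq by (intro gcd_nat.absorb1) simp
      finally show ?thesis .
    qed
    moreover have "n div (m * t) = e" using t0 assms by (subst n_eq) simp
    ultimately show "e \<in> (\<lambda>a. n div gcd a n) ` {a. a < n \<and> m dvd a}" by (metis (mono_tags, lifting) image_eqI mem_Collect_eq)
  qed
qed

lemma pi_e_form:
  assumes n: "n > 0" and H: "subgroup H (dihedral n)" and m: "m > 0" "m dvd n"
    and rot: "\<forall>a<n. (a, False) \<in> H \<longleftrightarrow> m dvd a"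
  shows "pi_e (dihedral n) H = {e. e dvd n div m} \<union> (if \<exists>a. (a, True) \<in> H then {2} else {})"
proof -
  have sub: "H \<subseteq> {(k, b). k < n}" using subgroup.subset[OF H] by (simp add: dcarrier)
  have Hdec: "H = (\<lambda>a. (a, False)) ` {a. a < n \<and> m dvd a} \<union> {x \<in> H. snd x}"
  proof
    show "H \<subseteq> (\<lambda>a. (a, False)) ` {a. a < n \<and> m dvd a} \<union> {x \<in> H. snd x}"
    proof
      fix x assume x: "x \<in> H"
      obtain a b where ab: "x = (a, b)" by (cases x)
      show "x \<in> (\<lambda>a. (a, False)) ` {a. a < n \<and> m dvd a} \<union> {x \<in> H. snd x}"
        using sub rot x ab by (cases b) auto
    qed
  next
    show "(\<lambda>a. (a, False)) ` {a. a < n \<and> m dvd a} \<union> {x \<in> H. snd x} \<subseteq> H"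
    proof (rule Un_least)
      show "(\<lambda>a. (a, False)) ` {a. a < n \<and> m dvd a} \<subseteq> H"
      proof
        fix x assume "x \<in> (\<lambda>a. (a, False)) ` {a. a < n \<and> m dvd a}"
        then obtain a where "x = (a, False)" "a < n" "m dvd a" by blast
        then show "x \<in> H" using rot by simp
      qed
    qed blast
  qed
  have o1: "group.ord (dihedral n) ` ((\<lambda>a. (a, False)) ` {a. a < n \<and> m dvd a}) = {e. e dvd n div m}"
  proof -
    have "group.ord (dihedral n) ` ((\<lambda>a. (a, False)) ` {a. a < n \<and> m dvd a})
        = (\<lambda>a. n div gcd a n) ` {a. a < n \<and> m dvd a}"
      unfolding image_image using n by (intro image_cong) (auto simp: ord_rot)
    then show ?thesis using nt_orders[OF m n] by simp
  qed
  have o2: "group.ord (dihedral n) ` {x \<in> H. snd x} = (if \<exists>a. (a, True) \<in> H then {2} else {})"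
  proof -
    have all: "\<forall>x\<in>{x \<in> H. snd x}. group.ord (dihedral n) x = 2"
      using sub n by (auto simp: ord_refl)
    show ?thesis
    proof (cases "\<exists>a. (a, True) \<in> H")
      case True
      then obtain a where mem: "(a, True) \<in> {x \<in> H. snd x}" by auto
      have "group.ord (dihedral n) ` {x \<in> H. snd x} = {2}"
      proof
        show "group.ord (dihedral n) ` {x \<in> H. snd x} \<subseteq> {2}" using all by blast
        show "{2} \<subseteq> group.ord (dihedral n) ` {x \<in> H. snd x}"
        proof -
          have "group.ord (dihedral n) (a, True) = 2" using all mem by blast
          then have "2 \<in> group.ord (dihedral n) ` {x \<in> H. snd x}" using mem by (metis image_eqI)
          then show ?thesis by simp
        qed
      qed
      then show ?thesis using True by simp
    next
      case False
      then have "{x \<in> H. snd x} = {}" by auto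
      then show ?thesis using False by simp
    qed
  qed
  show ?thesis unfolding pi_e_def by (subst Hdec) (simp only: image_Un o1 o2)
qed



lemma sub_pow: assumes "subgroup H G" "x \<in> H" shows "x [^]\<^bsub>G\<^esub> (j::nat) \<in> H"
proof (induction j)
  case 0 then show ?case using subgroup.one_closed[OF assms(1)] by simp
next
  case (Suc j) then show ?case using subgroup.m_closed[OF assms(1)] assms(2) by simp
qed

lemma rot_structure:
  assumes n: "n > 0" and H: "subgroup H (dihedral n)"
  shows "\<exists>m>0. m dvd n \<and> (\<forall>a<n. (a, False) \<in> H \<longleftrightarrow> m dvd a)"
proof -
  interpret G: group "dihedral n" using n dihedral_group by blast
  have one: "(0, False) \<in> H" using subgroup.one_closed[OF H] by (simp add: d_one)
  have invH: "((n - c) mod n, False) \<in> H" if "(c, False) \<in> H" "c < n" for c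
    using subgroup.m_inv_closed[OF H that(1)] inv_rot[OF n that(2)] by simp
  have powH: "((m * j) mod n, False) \<in> H" if "(m, False) \<in> H" "m < n" for m j
    using sub_pow[OF H that(1), of j] pow_rot[OF n that(2), of j] by (simp add: ac_simps)
  show ?thesis
  proof (cases "\<exists>k. 0 < k \<and> k < n \<and> (k, False) \<in> H")
    case False
    show ?thesis
    proof (intro exI[of _ n] conjI allI impI)
      fix a assume "a < n"
      then show "(a, False) \<in> H \<longleftrightarrow> n dvd a" using False one
        by (cases "a = 0") (auto dest: dvd_imp_le)
    qed (use n in auto)
  next
    case True
    define m where "m = (LEAST k. 0 < k \<and> k < n \<and> (k, False) \<in> H)"
    have mP: "0 < m \<and> m < n \<and> (m, False) \<in> H"
      unfolding m_def using True by (rule LeastI_ex)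
    have mmin: "\<not> (0 < r \<and> r < n \<and> (r, False) \<in> H)" if "r < m" for r
      using not_less_Least[OF that[unfolded m_def]] unfolding m_def .
    have mdvd: "m dvd a" if "(a, False) \<in> H" "a < n" for a
    proof -
      define q r where "q = a div m" and "r = a mod m"
      have a_eq: "a = m * q + r" unfolding q_def r_def by simp
      have rm: "r < m" unfolding r_def using mP by simp
      have mq: "m * q \<le> a" using a_eq by simp
      have p: "(m * q, False) \<in> H" using powH[of m q] mP mq \<open>a < n\<close> by simp
      have "((n - m * q) mod n, False) \<in> H" using invH[OF p] mq \<open>a < n\<close> by simp
      then have "(((n - m * q) mod n, False) \<otimes>\<^bsub>dihedral n\<^esub> (a, False)) \<in> H"
        using subgroup.m_closed[OF H] that(1) by blast
      moreover have "((n - m * q) mod n + a) mod n = r"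
      proof -
        have "((n - m * q) mod n + a) mod n = (n - m * q + a) mod n" by (simp add: mod_simps)
        also have "n - m * q + a = n + r" using a_eq mq \<open>a < n\<close> by simp
        also have "(n + r) mod n = r" using rm mP by simp
        finally show ?thesis .
      qed
      ultimately have "(r, False) \<in> H" by (simp add: dmult)
      then have "r = 0" using mmin[OF rm] rm mP by auto
      then show ?thesis unfolding r_def by auto
    qed
    have mn: "m dvd n"
    proof -
      define q r where "q = n div m" and "r = n mod m"
      have n_eq: "n = m * q + r" unfolding q_def r_def by simp
      have rm: "r < m" unfolding r_def using mP by simp
      show ?thesis
      proof (rule ccontr)
        assume "\<not> m dvd n"
        then have r0: "r > 0" unfolding r_def by (simp add: dvd_eq_mod_eq_0)
        then have mq: "m * q < n" using n_eq by simp
        have p: "(m * q, False) \<in> H" using powH[of m q] mP mq by simp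
        have "((n - m * q) mod n, False) \<in> H" using invH[OF p mq] .
        moreover have "(n - m * q) mod n = r"
        proof -
          have "n - m * q = r" using n_eq by simp
          moreover have "r < n" using rm mP by simp
          ultimately show ?thesis by simp
        qed
        ultimately have "(r, False) \<in> H" by simp
        then show False using mmin[OF rm] r0 rm mP by auto
      qed
    qed
    show ?thesis
    proof (intro exI[of _ m] conjI allI impI)
      fix a assume a: "a < n"
      show "(a, False) \<in> H \<longleftrightarrow> m dvd a"
      proof
        assume "(a, False) \<in> H" then show "m dvd a" using mdvd a by blast
      next
        assume "m dvd a"
        then obtain q where "a = m * q" by blast
        then show "(a, False) \<in> H" using powH[of m q] mP a by simp
      qed
    qed (use mP mn in auto)
  qed
qed



definition SS :: "nat \<Rightarrow> bool \<Rightarrow> nat set" where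
  "SS d b = {e. e dvd d} \<union> (if b then {2} else {})"

lemma classify:
  assumes n: "n > 0" and H: "subgroup H (dihedral n)"
  shows "\<exists>d b. d dvd n \<and> pi_e (dihedral n) H = SS d b"
proof -
  obtain m where m: "m > 0" "m dvd n" "\<forall>a<n. (a, False) \<in> H \<longleftrightarrow> m dvd a"
    using rot_structure[OF n H] by blast
  obtain k where k: "n = m * k" using m(2) by blast
  have "n div m dvd n" using k m(1) by simp
  then show ?thesis using pi_e_form[OF n H m(1,2) m(3)] unfolding SS_def by blast
qed

lemma realize:
  assumes n: "n > 0" and d: "d dvd n"
  shows "\<exists>H. subgroup H (dihedral n) \<and> pi_e (dihedral n) H = SS d b"
proof -
  interpret G: group "dihedral n" using n dihedral_group by blast
  define m where "m = n div d"
  have d0: "d > 0" using d n by (cases d) auto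
  obtain k where k: "n = d * k" using d by blast
  have k0: "k > 0" using k n by (cases k) auto
  have mk: "m = k" unfolding m_def using k d0 by simp
  have mn: "m dvd n" using mk k by simp
  have m0: "m > 0" using mk k0 by simp
  have nm: "n div m = d" using mk k k0 by simp
  define H where "H = {x. fst x < n \<and> m dvd fst x \<and> (snd x \<longrightarrow> b)}"
  have sub: "subgroup H (dihedral n)"
  proof (rule G.subgroupI)
    show "H \<subseteq> carrier (dihedral n)" unfolding H_def by (auto simp: dcarrier)
    have "(0, False) \<in> H" unfolding H_def using n by simp
    then show "H \<noteq> {}" by blast
  next
    fix x assume x: "x \<in> H"
    obtain a c where ac: "x = (a, c)" by (cases x)
    show "inv\<^bsub>dihedral n\<^esub> x \<in> H"
    proof (cases c)
      case True then show ?thesis using x ac by (auto simp: H_def inv_refl n)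
    next
      case False
      have "m dvd (n - a) mod n" using x ac mn by (auto simp: H_def intro!: dvd_mod dvd_diff_nat)
      then show ?thesis using x ac False n by (auto simp: H_def inv_rot)
    qed
  next
    fix x y assume x: "x \<in> H" and y: "y \<in> H"
    obtain a c where ac: "x = (a, c)" by (cases x)
    obtain a' c' where ac': "y = (a', c')" by (cases y)
    have "m dvd (a + (if c then n - a' else a')) mod n"
      using x y ac ac' mn by (auto simp: H_def intro!: dvd_mod dvd_diff_nat dvd_add)
    then show "x \<otimes>\<^bsub>dihedral n\<^esub> y \<in> H" using x y ac ac' n by (auto simp: H_def dmult)
  qed
  have rot: "\<forall>a<n. (a, False) \<in> H \<longleftrightarrow> m dvd a" unfolding H_def by auto
  have refl: "(\<exists>a. (a, True) \<in> H) \<longleftrightarrow> b" unfolding H_def using n by auto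
  have "pi_e (dihedral n) H = SS d b"
    using pi_e_form[OF n sub m0 mn rot] unfolding nm refl SS_def .
  then show ?thesis using sub by blast
qed

lemma SS_le:
  assumes "odd d1" "odd d2"
  shows "SS d1 b1 \<subseteq> SS d2 b2 \<longleftrightarrow> d1 dvd d2 \<and> (b1 \<longrightarrow> b2)"
proof
  assume le: "SS d1 b1 \<subseteq> SS d2 b2"
  have "d1 \<in> SS d1 b1" by (simp add: SS_def)
  then have "d1 \<in> SS d2 b2" using le by blast
  moreover have "d1 \<noteq> 2" using assms by auto
  ultimately have "d1 dvd d2" unfolding SS_def by (cases b2) auto
  moreover have "b1 \<longrightarrow> b2"
  proof
    assume b1
    then have "2 \<in> SS d2 b2" using le by (auto simp: SS_def)
    then show b2 using assms(2) by (auto simp: SS_def split: if_splits)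
  qed
  ultimately show "d1 dvd d2 \<and> (b1 \<longrightarrow> b2)" by blast
next
  assume "d1 dvd d2 \<and> (b1 \<longrightarrow> b2)"
  then show "SS d1 b1 \<subseteq> SS d2 b2" by (auto simp: SS_def intro: dvd_trans)
qed

lemma SS_eq:
  assumes "odd d1" "odd d2" "SS d1 b1 = SS d2 b2"
  shows "d1 = d2 \<and> b1 = b2"
  using SS_le[OF assms(1,2), of b1 b2] SS_le[OF assms(2,1), of b2 b1] assms(3)
  by (auto intro: dvd_antisym)



lemma class_eq:
  assumes "subgroup H1 G" "subgroup H2 G"
  shows "pe_class G H1 = pe_class G H2 \<longleftrightarrow> pi_e G H1 = pi_e G H2"
proof
  assume "pe_class G H1 = pe_class G H2"
  moreover have "H1 \<in> pe_class G H1" using assms(1) by (simp add: pe_class_def)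
  ultimately have "H1 \<in> pe_class G H2" by simp
  then show "pi_e G H1 = pi_e G H2" by (simp add: pe_class_def)
qed (simp add: pe_class_def)

theorem theorem2p6:
  fixes n :: nat
  assumes "odd n"
  shows "\<exists>f. bij_betw f (pe_classes (dihedral n)) (TC2 n) \<and>
           (\<forall>X\<in>pe_classes (dihedral n). \<forall>Y\<in>pe_classes (dihedral n).
              pe_le (dihedral n) X Y \<longleftrightarrow> TC2_le (f X) (f Y))"
proof -
  let ?G = "dihedral n"
  have n: "n > 0" using assms by (cases n) auto
  define f where "f X = (SOME p. p \<in> TC2 n \<and> (\<exists>H. subgroup H ?G \<and> X = pe_class ?G H \<and> pi_e ?G H = SS (fst p) (snd p)))" for X
  have fprop: "f (pe_class ?G H) \<in> TC2 n \<and> pi_e ?G H = SS (fst (f (pe_class ?G H))) (snd (f (pe_class ?G H)))"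
    if H: "subgroup H ?G" for H
  proof -
    obtain d b where db: "d dvd n" "pi_e ?G H = SS d b" using classify[OF n H] by blast
    have ex: "\<exists>p. p \<in> TC2 n \<and> (\<exists>H'. subgroup H' ?G \<and> pe_class ?G H = pe_class ?G H' \<and> pi_e ?G H' = SS (fst p) (snd p))"
      using db H by (intro exI[of _ "(d, b)"]) (auto simp: TC2_def)
    obtain H' where H': "f (pe_class ?G H) \<in> TC2 n" "subgroup H' ?G" "pe_class ?G H = pe_class ?G H'"
        "pi_e ?G H' = SS (fst (f (pe_class ?G H))) (snd (f (pe_class ?G H)))"
      using someI_ex[OF ex] unfolding f_def[of "pe_class ?G H"] by blast
    have "pi_e ?G H = pi_e ?G H'" using class_eq[OF H H'(2)] H'(3) by simp
    then show ?thesis using H' by simp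
  qed
  have oddT: "odd (fst p)" if "p \<in> TC2 n" for p
    using that assms by (auto simp: TC2_def dest: dvd_trans[where c = n, rotated] elim: oddE)
  show ?thesis
  proof (intro exI[of _ f] conjI ballI)
    show "bij_betw f (pe_classes ?G) (TC2 n)"
      unfolding bij_betw_def
    proof
      show "inj_on f (pe_classes ?G)"
      proof (rule inj_onI)
        fix X Y assume X: "X \<in> pe_classes ?G" and Y: "Y \<in> pe_classes ?G" and eq: "f X = f Y"
        obtain H1 where H1: "subgroup H1 ?G" "X = pe_class ?G H1" using X by (auto simp: pe_classes_def)
        obtain H2 where H2: "subgroup H2 ?G" "Y = pe_class ?G H2" using Y by (auto simp: pe_classes_def)
        have "pi_e ?G H1 = pi_e ?G H2" using fprop[OF H1(1)] fprop[OF H2(1)] H1(2) H2(2) eq by simp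
        then show "X = Y" using class_eq[OF H1(1) H2(1)] H1(2) H2(2) by simp
      qed
    next
      show "f ` pe_classes ?G = TC2 n"
      proof
        show "f ` pe_classes ?G \<subseteq> TC2 n" using fprop by (auto simp: pe_classes_def)
      next
        show "TC2 n \<subseteq> f ` pe_classes ?G"
        proof
          fix p assume p: "p \<in> TC2 n"
          obtain d b where pdb: "p = (d, b)" by (cases p)
          have d: "d dvd n" using p pdb by (simp add: TC2_def)
          obtain H where H: "subgroup H ?G" "pi_e ?G H = SS d b" using realize[OF n d] by blast
          have fp: "f (pe_class ?G H) \<in> TC2 n" "SS d b = SS (fst (f (pe_class ?G H))) (snd (f (pe_class ?G H)))"
            using fprop[OF H(1)] H(2) by auto
          have "d = fst (f (pe_class ?G H)) \<and> b = snd (f (pe_class ?G H))"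
            using SS_eq[OF oddT[OF p, unfolded pdb fst_conv] oddT[OF fp(1)] fp(2)] .
          then have "f (pe_class ?G H) = p" using pdb by (simp add: prod_eq_iff)
          moreover have "pe_class ?G H \<in> pe_classes ?G" using H(1) by (auto simp: pe_classes_def)
          ultimately show "p \<in> f ` pe_classes ?G" by blast
        qed
      qed
    qed
  next
    fix X Y assume X: "X \<in> pe_classes ?G" and Y: "Y \<in> pe_classes ?G"
    obtain H1 where H1: "subgroup H1 ?G" "X = pe_class ?G H1" using X by (auto simp: pe_classes_def)
    obtain H2 where H2: "subgroup H2 ?G" "Y = pe_class ?G H2" using Y by (auto simp: pe_classes_def)
    have "pe_le ?G X Y \<longleftrightarrow> pi_e ?G H1 \<subseteq> pi_e ?G H2"
    proof
      assume "pe_le ?G X Y"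
      then obtain K1 K2 where K: "subgroup K1 ?G" "subgroup K2 ?G" "X = pe_class ?G K1" "Y = pe_class ?G K2"
          "pi_e ?G K1 \<subseteq> pi_e ?G K2" unfolding pe_le_def by blast
      have "pi_e ?G K1 = pi_e ?G H1" using class_eq[OF K(1) H1(1)] K(3) H1(2) by simp
      moreover have "pi_e ?G K2 = pi_e ?G H2" using class_eq[OF K(2) H2(1)] K(4) H2(2) by simp
      ultimately show "pi_e ?G H1 \<subseteq> pi_e ?G H2" using K(5) by simp
    next
      assume "pi_e ?G H1 \<subseteq> pi_e ?G H2"
      then show "pe_le ?G X Y" unfolding pe_le_def using H1 H2 by blast
    qed
    also have "\<dots> \<longleftrightarrow> SS (fst (f X)) (snd (f X)) \<subseteq> SS (fst (f Y)) (snd (f Y))"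
      using fprop[OF H1(1)] fprop[OF H2(1)] H1(2) H2(2) by simp
    also have "\<dots> \<longleftrightarrow> TC2_le (f X) (f Y)"
      using SS_le[OF oddT oddT] fprop[OF H1(1)] fprop[OF H2(1)] H1(2) H2(2) by (simp add: TC2_le_def)
    finally show "pe_le ?G X Y \<longleftrightarrow> TC2_le (f X) (f Y)" .
  qed
qed

end
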